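(* Let $\mathbf A$ be a super-paraorthomodular lattice and $\mathrm{Sh}(\mathbf A)=\{a\in A: a\land a'=0\}$. Then $(\mathrm{Sh}(\mathbf A),\leq,{}',0,1)$, with the order and involution inherited from $\mathbf A$, is a sub-orthomodular poset of $\mathbf A$.
   Context: A pseudo-Kleene lattice is an algebra $(A,\land,\lor,{}',0,1)$ that is a bounded lattice with an antitone involution ${}'$ ($x\leq y\Rightarrow y'\leq x'$, $x''=x$) satisfying $x\land x'\leq y\lor y'$. It is super-paraorthomodular if for all $x,y$: (SP1) $x\leq y$ and $x'\land y=(x\land x')\lor(y\land y')$ imply $y\land(x\lor x')=x\lor(y\land y')$; (SP2) $x\leq y$ implies $(x\land x')\lor(y\land y')=(x'\land y)\land(x'\land y)'$. An orthomodular poset is a bounded poset $(P,\leq,0,1)$ with antitone involution ${}'$ such that: $x\land x'=0$ for all $x$ (the meet exists in $P$ and is $0$); whenever $x\leq y'$ the join $x\lor y$ exists in $P$; and (paraorthomodularity) if $x\leq y$ and the meet $x'\land y$ exists and equals $0$, then $x=y$. A subset $B\subseteq A$ containing $0,1$ and closed under ${}'$ is a sub-orthomodular poset of $\mathbf A$ if $(B,\leq,{}',0,1)$ is an orthomodular poset and, for $x,y\in B$ with $x\leq y'$, the join of $x,y$ in $B$ equals their join in $\mathbf A$. *)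

theory Defs
  imports Main
begin

text \<open>The algebra A is the whole (bounded lattice) type 'a, with involution c.\<close>

definition pseudo_kleene :: "('a::bounded_lattice \<Rightarrow> 'a) \<Rightarrow> bool" where
  "pseudo_kleene c \<longleftrightarrow>
     (\<forall>x y. x \<le> y \<longrightarrow> c y \<le> c x) \<and>
     (\<forall>x. c (c x) = x) \<and>
     (\<forall>x y. inf x (c x) \<le> sup y (c y))"

definition super_paraorthomodular :: "('a::bounded_lattice \<Rightarrow> 'a) \<Rightarrow> bool" where
  "super_paraorthomodular c \<longleftrightarrow> pseudo_kleene c \<and>
     (\<forall>x y. x \<le> y \<and> inf (c x) y = sup (inf x (c x)) (inf y (c y))
        \<longrightarrow> inf y (sup x (c x)) = sup x (inf y (c y))) \<and>
     (\<forall>x y. x \<le> y \<longrightarrow>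
        sup (inf x (c x)) (inf y (c y)) = inf (inf (c x) y) (c (inf (c x) y)))"

definition is_inf_in :: "'a::order set \<Rightarrow> 'a \<Rightarrow> 'a \<Rightarrow> 'a \<Rightarrow> bool" where
  "is_inf_in P x y m \<longleftrightarrow> m \<in> P \<and> m \<le> x \<and> m \<le> y \<and>
     (\<forall>w\<in>P. w \<le> x \<and> w \<le> y \<longrightarrow> w \<le> m)"

definition is_sup_in :: "'a::order set \<Rightarrow> 'a \<Rightarrow> 'a \<Rightarrow> 'a \<Rightarrow> bool" where
  "is_sup_in P x y s \<longleftrightarrow> s \<in> P \<and> x \<le> s \<and> y \<le> s \<and>
     (\<forall>w\<in>P. x \<le> w \<and> y \<le> w \<longrightarrow> s \<le> w)"

definition orthomodular_poset :: "'a::order set \<Rightarrow> ('a \<Rightarrow> 'a) \<Rightarrow> 'a \<Rightarrow> 'a \<Rightarrow> bool" where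
  "orthomodular_poset P c z u \<longleftrightarrow>
     z \<in> P \<and> u \<in> P \<and> (\<forall>x\<in>P. z \<le> x \<and> x \<le> u) \<and>
     (\<forall>x\<in>P. c x \<in> P) \<and>
     (\<forall>x\<in>P. \<forall>y\<in>P. x \<le> y \<longrightarrow> c y \<le> c x) \<and>
     (\<forall>x\<in>P. c (c x) = x) \<and>
     (\<forall>x\<in>P. is_inf_in P x (c x) z) \<and>
     (\<forall>x\<in>P. \<forall>y\<in>P. x \<le> c y \<longrightarrow> (\<exists>s. is_sup_in P x y s)) \<and>
     (\<forall>x\<in>P. \<forall>y\<in>P. x \<le> y \<and> is_inf_in P (c x) y z \<longrightarrow> x = y)"

definition sub_orthomodular_poset :: "'a::bounded_lattice set \<Rightarrow> ('a \<Rightarrow> 'a) \<Rightarrow> bool" where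
  "sub_orthomodular_poset B c \<longleftrightarrow>
     bot \<in> B \<and> top \<in> B \<and> (\<forall>x\<in>B. c x \<in> B) \<and>
     orthomodular_poset B c bot top \<and>
     (\<forall>x\<in>B. \<forall>y\<in>B. x \<le> c y \<longrightarrow> (\<forall>s. is_sup_in B x y s \<longrightarrow> s = sup x y))"

definition Sh :: "('a::bounded_lattice \<Rightarrow> 'a) \<Rightarrow> 'a set" where
  "Sh c = {a. inf a (c a) = bot}"

end

theory Submission
  imports Defs
begin

lemma pk_basic:
  fixes c :: "'a::bounded_lattice \<Rightarrow> 'a"
  assumes "pseudo_kleene c"
  shows pk_anti: "x \<le> y \<Longrightarrow> c y \<le> c x"
    and pk_inv: "c (c x) = x"
  using assms unfolding pseudo_kleene_def by auto

lemma pk_dm_sup: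
  fixes c :: "'a::bounded_lattice \<Rightarrow> 'a"
  assumes "pseudo_kleene c"
  shows "c (sup x y) = inf (c x) (c y)"
proof (rule antisym)
  show "c (sup x y) \<le> inf (c x) (c y)"
    using pk_anti[OF assms] by simp
  have "c (inf (c x) (c y)) \<ge> x"
    using pk_anti[OF assms, of "inf (c x) (c y)" "c x"] pk_inv[OF assms] by simp
  moreover have "c (inf (c x) (c y)) \<ge> y"
    using pk_anti[OF assms, of "inf (c x) (c y)" "c y"] pk_inv[OF assms] by simp
  ultimately have "sup x y \<le> c (inf (c x) (c y))" by simp
  then show "inf (c x) (c y) \<le> c (sup x y)"
    using pk_anti[OF assms] pk_inv[OF assms] by metis
qed

lemma pk_dm_inf:
  fixes c :: "'a::bounded_lattice \<Rightarrow> 'a"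
  assumes "pseudo_kleene c"
  shows "c (inf x y) = sup (c x) (c y)"
  using pk_dm_sup[OF assms, of "c x" "c y"] pk_inv[OF assms] by metis

lemma pk_bot:
  fixes c :: "'a::bounded_lattice \<Rightarrow> 'a"
  assumes "pseudo_kleene c"
  shows "c bot = top" "c top = bot"
proof -
  have "c (c top) \<le> c bot" using pk_anti[OF assms, of bot "c top"] by simp
  then show "c bot = top" using pk_inv[OF assms, of top] by (metis top_unique)
  then show "c top = bot" using pk_inv[OF assms] by metis
qed

theorem lemma3p18:
  fixes c :: "'a::bounded_lattice \<Rightarrow> 'a"
  assumes "super_paraorthomodular c"
  shows "sub_orthomodular_poset (Sh c) c"
proof -
  have pk: "pseudo_kleene c" using assms unfolding super_paraorthomodular_def by simp
  have SP1: "\<And>x y. x \<le> y \<Longrightarrow> inf (c x) y = sup (inf x (c x)) (inf y (c y))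
        \<Longrightarrow> inf y (sup x (c x)) = sup x (inf y (c y))"
    using assms unfolding super_paraorthomodular_def by blast
  have SP2: "\<And>x y. x \<le> y \<Longrightarrow>
        sup (inf x (c x)) (inf y (c y)) = inf (inf (c x) y) (c (inf (c x) y))"
    using assms unfolding super_paraorthomodular_def by blast
  note inv = pk_inv[OF pk] and anti = pk_anti[OF pk] and bt = pk_bot[OF pk]
  note dms = pk_dm_sup[OF pk] and dmi = pk_dm_inf[OF pk]
  have botS: "bot \<in> Sh c" by (simp add: Sh_def)
  have topS: "top \<in> Sh c" by (simp add: Sh_def bt)
  have cS: "\<forall>x\<in>Sh c. c x \<in> Sh c" by (auto simp: Sh_def inv inf_commute)
  have supS: "\<And>x y. x \<in> Sh c \<Longrightarrow> y \<in> Sh c \<Longrightarrow> x \<le> c y \<Longrightarrow> sup x y \<in> Sh c"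
  proof -
    fix x y assume x: "x \<in> Sh c" and y: "y \<in> Sh c" and le: "x \<le> c y"
    have "sup (inf x (c x)) (inf (c y) (c (c y))) = inf (inf (c x) (c y)) (c (inf (c x) (c y)))"
      using SP2[OF le] .
    moreover have "inf (c y) (c (c y)) = bot" using y by (simp add: Sh_def inv inf_commute)
    moreover have "inf x (c x) = bot" using x by (simp add: Sh_def)
    ultimately have "inf (inf (c x) (c y)) (c (inf (c x) (c y))) = bot" by simp
    moreover have "c (inf (c x) (c y)) = sup x y" using dmi inv by metis
    ultimately show "sup x y \<in> Sh c" by (simp add: Sh_def dms inf_commute)
  qed
  have om: "orthomodular_poset (Sh c) c bot top"
    unfolding orthomodular_poset_def
  proof (intro conjI ballI impI)
    show "bot \<in> Sh c" "top \<in> Sh c" by (fact botS, fact topS)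
    fix x assume x: "x \<in> Sh c"
    show "bot \<le> x" "x \<le> top" by simp_all
    show "c x \<in> Sh c" using cS x by blast
    show "c (c x) = x" by (rule inv)
    show "is_inf_in (Sh c) x (c x) bot"
      using x botS unfolding is_inf_in_def Sh_def by (auto simp: le_inf_iff[symmetric] simp del: le_inf_iff)
  next
    fix x y assume "x \<in> Sh c" "y \<in> Sh c" "x \<le> y"
    then show "c y \<le> c x" using anti by blast
  next
    fix x y assume x: "x \<in> Sh c" and y: "y \<in> Sh c" and le: "x \<le> c y"
    have "is_sup_in (Sh c) x y (sup x y)"
      unfolding is_sup_in_def using supS[OF x y le] by simp
    then show "\<exists>s. is_sup_in (Sh c) x y s" by blast
  next
    fix x y assume x: "x \<in> Sh c" and y: "y \<in> Sh c" and h: "x \<le> y \<and> is_inf_in (Sh c) (c x) y bot"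
    have le: "x \<le> y" using h by simp
    have x0: "inf x (c x) = bot" and y0: "inf y (c y) = bot" using x y by (simp_all add: Sh_def)
    have "inf (inf (c x) y) (c (inf (c x) y)) = bot" using SP2[OF le] x0 y0 by simp
    then have mS: "inf (c x) y \<in> Sh c" by (simp add: Sh_def)
    have m0: "inf (c x) y = bot"
      using h mS unfolding is_inf_in_def by (simp add: bot_unique)
    have "inf y (sup x (c x)) = sup x (inf y (c y))" using SP1[OF le] m0 x0 y0 by simp
    moreover have "sup x (c x) = top"
      using x0 dmi[of x "c x"] inv bt by (metis sup_commute)
    ultimately show "x = y" using y0 by simp
  qed
  have last: "\<forall>x\<in>Sh c. \<forall>y\<in>Sh c. x \<le> c y \<longrightarrow> (\<forall>s. is_sup_in (Sh c) x y s \<longrightarrow> s = sup x y)"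
  proof (intro ballI allI impI)
    fix x y s assume x: "x \<in> Sh c" and y: "y \<in> Sh c" and le: "x \<le> c y"
      and s: "is_sup_in (Sh c) x y s"
    have "sup x y \<in> Sh c" using supS[OF x y le] .
    then have "s \<le> sup x y" using s unfolding is_sup_in_def by simp
    moreover have "sup x y \<le> s" using s unfolding is_sup_in_def by simp
    ultimately show "s = sup x y" by simp
  qed
  show ?thesis
    unfolding sub_orthomodular_poset_def using botS topS cS om last by blast
qed

end
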